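(* Let $R$ be a ring and $x\in R$ a nonunit. Then $x$ is a parameter on $R$ if and only if $\operatorname{ht}xR\ge1$ and $(0:x^n)=(0:x^{n+1})$ for some $n\ge1$.
   Context: All rings are commutative with identity. A parameter on $R$ is a parameter sequence of length one: an element $x$ such that (1) $x$ is weakly proregular, meaning there is $n\ge1$ with $(0:_Rx^n)=(0:_Rx^{n+1})$ (equivalently, for every $n$ there is $m\ge n$ such that the map $(0:_Rx^m)\to(0:_Rx^n)$, $r\mapsto x^{m-n}r$, is zero), (2) $xR\neq R$, and (3) $H^1_x(R)_p\neq0$ for all primes $p\supseteq xR$, where $H^1_x(R)=R_x/\operatorname{im}(R\to R_x)$. *)

theory Defs
  imports Main "HOL-Library.Extended_Nat"
begin

definition principal_ideal :: "'a::comm_ring_1 \<Rightarrow> 'a set" where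
  "principal_ideal x = {x * r | r. True}"

definition annihilator :: "'a::comm_ring_1 \<Rightarrow> 'a set" where
  "annihilator a = {r. r * a = 0}"

definition prime_ideal :: "'a::comm_ring_1 set \<Rightarrow> bool" where
  "prime_ideal P \<longleftrightarrow>
     0 \<in> P \<and> (\<forall>a\<in>P. \<forall>b\<in>P. a + b \<in> P) \<and> (\<forall>r. \<forall>a\<in>P. r * a \<in> P) \<and>
     1 \<notin> P \<and> (\<forall>a b. a * b \<in> P \<longrightarrow> a \<in> P \<or> b \<in> P)"

definition prime_height :: "'a::comm_ring_1 set \<Rightarrow> enat" where
  "prime_height P = (SUP n \<in> {n. \<exists>c :: nat \<Rightarrow> 'a set.
       (\<forall>i\<le>n. prime_ideal (c i)) \<and> (\<forall>i<n. c i \<subset> c (Suc i)) \<and> c n = P}. enat n)"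

definition ideal_height :: "'a::comm_ring_1 set \<Rightarrow> enat" where
  "ideal_height I = (INF P \<in> {P. prime_ideal P \<and> I \<subseteq> P}. prime_height P)"

definition weakly_proregular :: "'a::comm_ring_1 \<Rightarrow> bool" where
  "weakly_proregular x \<longleftrightarrow> (\<exists>n\<ge>1. annihilator (x ^ n) = annihilator (x ^ (n + 1)))"

text \<open>The fraction a / x^k of R_x lies in the image of R \<rightarrow> R_x
  (a/x^k = b/1 in R_x iff x^m (a - x^k b) = 0 for some m).\<close>
definition frac_in_image :: "'a::comm_ring_1 \<Rightarrow> 'a \<Rightarrow> nat \<Rightarrow> bool" where
  "frac_in_image x a k \<longleftrightarrow> (\<exists>b m. x ^ m * (a - x ^ k * b) = 0)"

text \<open>H^1_x(R)_p \<noteq> 0, with H^1_x(R) = R_x / im(R \<rightarrow> R_x): some class [a/x^k] is not killed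
  by any t outside p.\<close>
definition H1_loc_nonzero :: "'a::comm_ring_1 \<Rightarrow> 'a set \<Rightarrow> bool" where
  "H1_loc_nonzero x p \<longleftrightarrow> (\<exists>a k. \<forall>t. t \<notin> p \<longrightarrow> \<not> frac_in_image x (t * a) k)"

definition is_parameter :: "'a::comm_ring_1 \<Rightarrow> bool" where
  "is_parameter x \<longleftrightarrow> weakly_proregular x \<and> principal_ideal x \<noteq> UNIV \<and>
     (\<forall>p. prime_ideal p \<and> principal_ideal x \<subseteq> p \<longrightarrow> H1_loc_nonzero x p)"

end

theory Submission
  imports Defs
begin

lemma pI0: "prime_ideal P \<Longrightarrow> 0 \<in> P" by (simp add: prime_ideal_def)
lemma pIadd: "prime_ideal P \<Longrightarrow> a \<in> P \<Longrightarrow> b \<in> P \<Longrightarrow> a + b \<in> P" by (simp add: prime_ideal_def)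
lemma pImul: "prime_ideal P \<Longrightarrow> a \<in> P \<Longrightarrow> r * a \<in> P" by (simp add: prime_ideal_def)
lemma pI1: "prime_ideal P \<Longrightarrow> 1 \<notin> P" by (simp add: prime_ideal_def)
lemma pIprime: "prime_ideal P \<Longrightarrow> a * b \<in> P \<Longrightarrow> a \<in> P \<or> b \<in> P" by (simp add: prime_ideal_def)


definition idl :: "'a::comm_ring_1 set \<Rightarrow> bool" where
  "idl I \<longleftrightarrow> 0 \<in> I \<and> (\<forall>a\<in>I. \<forall>b\<in>I. a + b \<in> I) \<and> (\<forall>r. \<forall>a\<in>I. r * a \<in> I)"

lemma subset_chain_iff: "subset.chain A C \<longleftrightarrow> C \<subseteq> A \<and> (\<forall>x\<in>C. \<forall>y\<in>C. x \<subseteq> y \<or> y \<subseteq> x)"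
  by (auto simp: subset.chain_def)

lemma prime_avoiding:
  fixes S :: "'a::comm_ring_1 set"
  assumes S1: "1 \<in> S" and S0: "0 \<notin> S" and Sm: "\<And>s t. s \<in> S \<Longrightarrow> t \<in> S \<Longrightarrow> s * t \<in> S"
  shows "\<exists>Q. prime_ideal Q \<and> Q \<inter> S = {}"
proof -
  let ?A = "{I. idl I \<and> I \<inter> S = {}}"
  have z: "{0} \<in> ?A" using S0 by (simp add: idl_def)
  have ne: "?A \<noteq> {}" using z by blast
  have "\<exists>M\<in>?A. \<forall>X\<in>?A. M \<subseteq> X \<longrightarrow> X = M"
  proof (rule subset_Zorn_nonempty[OF ne])
    fix C assume Cne: "C \<noteq> {}" and ch: "subset.chain ?A C"
    have Ci: "\<And>U. U \<in> C \<Longrightarrow> idl U" and Cs: "\<And>U. U \<in> C \<Longrightarrow> U \<inter> S = {}"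
      using ch by (auto simp: subset_chain_iff)
    have cmp: "\<And>U V. U \<in> C \<Longrightarrow> V \<in> C \<Longrightarrow> U \<subseteq> V \<or> V \<subseteq> U" using ch by (auto simp: subset_chain_iff)
    obtain U0 where U0: "U0 \<in> C" using Cne by auto
    have "idl (\<Union>C)" unfolding idl_def
    proof (intro conjI ballI allI)
      show "0 \<in> \<Union>C" using U0 Ci[OF U0] by (auto simp: idl_def)
      show "r * a \<in> \<Union>C" if ha: "a \<in> \<Union>C" for r a
      proof -
        obtain U where "U \<in> C" "a \<in> U" using ha by blast
        then have "r * a \<in> U" using Ci[of U] by (auto simp: idl_def)
        then show ?thesis using \<open>U \<in> C\<close> by blast
      qed
      show "a + b \<in> \<Union>C" if ha: "a \<in> \<Union>C" and hb: "b \<in> \<Union>C" for a b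
      proof -
        obtain U where U: "U \<in> C" "a \<in> U" using ha by blast
        obtain V where V: "V \<in> C" "b \<in> V" using hb by blast
        show ?thesis
        proof (cases "U \<subseteq> V")
          case True
          then have "a + b \<in> V" using U V Ci[of V] by (auto simp: idl_def)
          then show ?thesis using V by auto
        next
          case False
          then have "V \<subseteq> U" using cmp U V by blast
          then have "a + b \<in> U" using U V Ci[of U] by (auto simp: idl_def)
          then show ?thesis using U by auto
        qed
      qed
    qed
    moreover have "\<Union>C \<inter> S = {}" using Cs by auto
    ultimately show "\<Union>C \<in> ?A" by simp
  qed
  then obtain M where M: "M \<in> ?A" and mx: "\<forall>X\<in>?A. M \<subseteq> X \<longrightarrow> X = M" ..
  have Mi: "idl M" and MS: "M \<inter> S = {}" using M by auto
  have M0: "0 \<in> M" and Madd: "\<And>a b. a \<in> M \<Longrightarrow> b \<in> M \<Longrightarrow> a + b \<in> M"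
    and Mmul: "\<And>r a. a \<in> M \<Longrightarrow> r * a \<in> M" using Mi by (auto simp: idl_def)
  have ext: "\<exists>m r. m \<in> M \<and> m + a * r \<in> S" if a: "a \<notin> M" for a
  proof -
    let ?I = "{m + a * r | m r. m \<in> M}"
    have memI: "\<And>m r. m \<in> M \<Longrightarrow> m + a * r \<in> ?I" by blast
    have "idl ?I" unfolding idl_def
    proof (intro conjI ballI allI)
      show "0 \<in> ?I" using memI[OF M0, of 0] by simp
      show "u + v \<in> ?I" if hu: "u \<in> ?I" and hv: "v \<in> ?I" for u v
      proof -
        obtain m1 r1 where 1: "u = m1 + a * r1" "m1 \<in> M" using hu by blast
        obtain m2 r2 where 2: "v = m2 + a * r2" "m2 \<in> M" using hv by blast
        have "u + v = (m1 + m2) + a * (r1 + r2)" using 1 2 by (simp add: algebra_simps)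
        then show ?thesis using memI[OF Madd[OF 1(2) 2(2)]] by simp
      qed
      show "r * u \<in> ?I" if hu: "u \<in> ?I" for r u
      proof -
        obtain m1 r1 where 1: "u = m1 + a * r1" "m1 \<in> M" using hu by blast
        have "r * u = r * m1 + a * (r * r1)" using 1 by (simp add: algebra_simps)
        then show ?thesis using memI[OF Mmul[OF 1(2)]] by simp
      qed
    qed
    moreover have "M \<subseteq> ?I"
    proof
      fix m assume "m \<in> M" then show "m \<in> ?I" using memI[of m 0] by simp
    qed
    moreover have "a \<in> ?I" using memI[OF M0, of 1] by simp
    ultimately have "?I \<notin> ?A"
    proof (intro notI)
      assume "M \<subseteq> ?I" "a \<in> ?I" "?I \<in> ?A"
      then have "?I = M" using mx by blast
      then show False using \<open>a \<in> ?I\<close> a by simp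
    qed
    then have "?I \<inter> S \<noteq> {}" using \<open>idl ?I\<close> by simp
    then show ?thesis by auto
  qed
  have "prime_ideal M" unfolding prime_ideal_def
  proof (intro conjI ballI allI impI)
    show "0 \<in> M" by (rule M0)
    show "a + b \<in> M" if "a \<in> M" "b \<in> M" for a b using that by (rule Madd)
    show "r * a \<in> M" if "a \<in> M" for r a using that by (rule Mmul)
    show "1 \<notin> M" using MS S1 by auto
    show "a \<in> M \<or> b \<in> M" if ab: "a * b \<in> M" for a b
    proof (rule ccontr)
      assume "\<not> ?thesis"
      then have "a \<notin> M" "b \<notin> M" by auto
      then obtain m1 r1 m2 r2 where 1: "m1 \<in> M" "m1 + a * r1 \<in> S" and 2: "m2 \<in> M" "m2 + b * r2 \<in> S"
        using ext by meson
      have eq: "(m1 + a * r1) * (m2 + b * r2) = (m2 + b * r2) * m1 + (r1 * a) * m2 + (r1 * r2) * (a * b)"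
        by (simp add: algebra_simps)
      have "(m1 + a * r1) * (m2 + b * r2) \<in> M" unfolding eq
        using Madd Mmul 1(1) 2(1) ab by metis
      moreover have "(m1 + a * r1) * (m2 + b * r2) \<in> S" using Sm 1(2) 2(2) by blast
      ultimately show False using MS by auto
    qed
  qed
  then show ?thesis using MS by blast
qed

lemma minimal_prime_exists:
  fixes p :: "'a::comm_ring_1 set"
  assumes "prime_ideal p"
  shows "\<exists>q. prime_ideal q \<and> q \<subseteq> p \<and> (\<forall>q'. prime_ideal q' \<and> q' \<subseteq> q \<longrightarrow> q' = q)"
proof -
  let ?A = "{U. prime_ideal (- U) \<and> - U \<subseteq> p}"
  have ne: "?A \<noteq> {}" using assms by (rule_tac ex_in_conv[THEN iffD1]) (rule exI[of _ "- p"], simp)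
  have "\<exists>M\<in>?A. \<forall>X\<in>?A. M \<subseteq> X \<longrightarrow> X = M"
  proof (rule subset_Zorn_nonempty[OF ne])
    fix C assume Cne: "C \<noteq> {}" and ch: "subset.chain ?A C"
    have CA: "\<And>U. U \<in> C \<Longrightarrow> prime_ideal (- U) \<and> - U \<subseteq> p" using ch by (auto simp: subset_chain_iff)
    have cmp: "\<And>U V. U \<in> C \<Longrightarrow> V \<in> C \<Longrightarrow> U \<subseteq> V \<or> V \<subseteq> U" using ch by (auto simp: subset_chain_iff)
    obtain U0 where U0: "U0 \<in> C" using Cne by auto
    have mem: "y \<in> - \<Union>C \<longleftrightarrow> (\<forall>U\<in>C. y \<in> - U)" for y by auto
    have Cp: "\<And>U. U \<in> C \<Longrightarrow> prime_ideal (- U)" using CA by simp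
    have "prime_ideal (- \<Union>C)"
      unfolding prime_ideal_def
    proof (intro conjI ballI allI impI)
      show "0 \<in> - \<Union>C" using Cp pI0 by fastforce
      show "a + b \<in> - \<Union>C" if "a \<in> - \<Union>C" "b \<in> - \<Union>C" for a b
        using that Cp pIadd[of "- U" a b for U] by fastforce
      show "r * a \<in> - \<Union>C" if "a \<in> - \<Union>C" for r a
        using that Cp pImul[of "- U" a r for U] by fastforce
      show "1 \<notin> - \<Union>C" using Cp[OF U0] pI1[of "- U0"] U0 by auto
      show "a \<in> - \<Union>C \<or> b \<in> - \<Union>C" if ab: "a * b \<in> - \<Union>C" for a b
      proof (rule ccontr)
        assume "\<not> ?thesis"
        then obtain U V where U: "U \<in> C" "a \<in> U" and V: "V \<in> C" "b \<in> V" by auto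
        show False
        proof (cases "U \<subseteq> V")
          case True
          then have "a \<in> V" using U by auto
          moreover have "a * b \<in> - V" using ab V by auto
          ultimately show False using Cp[OF V(1)] V pIprime[of "- V" a b] by auto
        next
          case False
          then have "V \<subseteq> U" using cmp U V by blast
          then have "b \<in> U" using V by auto
          moreover have "a * b \<in> - U" using ab U by auto
          ultimately show False using Cp[OF U(1)] U pIprime[of "- U" a b] by auto
        qed
      qed
    qed
    moreover have "- \<Union>C \<subseteq> p" using CA U0 by blast
    ultimately show "\<Union>C \<in> ?A" by simp
  qed
  then obtain M where M: "M \<in> ?A" and mx: "\<forall>X\<in>?A. M \<subseteq> X \<longrightarrow> X = M" ..
  show ?thesis
  proof (rule exI[of _ "- M"], intro conjI allI impI)
    show "prime_ideal (- M)" "- M \<subseteq> p" using M by auto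
    fix q' assume q': "prime_ideal q' \<and> q' \<subseteq> - M"
    have "- q' \<in> ?A" using q' M by auto
    moreover have "M \<subseteq> - q'" using q' by auto
    ultimately have "- q' = M" using mx by (simp only: Ball_def)
    then show "q' = - M" by auto
  qed
qed



lemma height_ge1_imp:
  assumes "prime_height (Q::'a::comm_ring_1 set) \<ge> 1"
  shows "\<exists>Q'. prime_ideal Q' \<and> Q' \<subset> Q"
proof (rule ccontr)
  assume no: "\<not> ?thesis"
  have "prime_height Q \<le> 0" unfolding prime_height_def
  proof (rule SUP_least)
    fix n assume "n \<in> {n. \<exists>c :: nat \<Rightarrow> 'a set.
       (\<forall>i\<le>n. prime_ideal (c i)) \<and> (\<forall>i<n. c i \<subset> c (Suc i)) \<and> c n = Q}"
    then obtain c :: "nat \<Rightarrow> 'a set" where c: "\<forall>i\<le>n. prime_ideal (c i)" "\<forall>i<n. c i \<subset> c (Suc i)" "c n = Q"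
      by blast
    show "enat n \<le> 0"
    proof (cases n)
      case 0 then show ?thesis by (simp add: zero_enat_def)
    next
      case (Suc k)
      have "prime_ideal (c k)" using c(1) Suc by simp
      moreover have "c k \<subset> Q" using c(2,3) Suc by auto
      ultimately show ?thesis using no by blast
    qed
  qed
  then show False using assms order_trans[of "enat 1" "prime_height Q" 0] by (simp add: one_enat_def zero_enat_def)
qed

lemma imp_height_ge1:
  assumes "prime_ideal (Q'::'a::comm_ring_1 set)" "Q' \<subset> Q" "prime_ideal Q"
  shows "prime_height Q \<ge> 1"
proof -
  let ?c = "\<lambda>i::nat. if i = 0 then Q' else Q"
  have "(1::nat) \<in> {n. \<exists>c :: nat \<Rightarrow> 'a set.
       (\<forall>i\<le>n. prime_ideal (c i)) \<and> (\<forall>i<n. c i \<subset> c (Suc i)) \<and> c n = Q}"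
  proof (rule CollectI, rule exI[of _ ?c], intro conjI allI impI)
    fix i :: nat assume "i \<le> 1" then show "prime_ideal (?c i)" using assms by auto
  next
    fix i :: nat assume "i < 1" then show "?c i \<subset> ?c (Suc i)" using assms by auto
  qed simp
  then have "enat 1 \<le> prime_height Q" unfolding prime_height_def by (rule SUP_upper)
  then show ?thesis by (simp add: one_enat_def)
qed

lemma pow_notin: "prime_ideal q \<Longrightarrow> x \<notin> q \<Longrightarrow> (x::'a::comm_ring_1) ^ m \<notin> q"
proof (induction m)
  case 0 then show ?case using pI1 by simp
next
  case (Suc m) then show ?case using pIprime[of q x "x ^ m"] by auto
qed



theorem corollary3p4:
  fixes x :: "'a::comm_ring_1"
  assumes "\<not> x dvd 1"
  shows "is_parameter x \<longleftrightarrow>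
           ideal_height (principal_ideal x) \<ge> 1 \<and>
           (\<exists>n\<ge>1. annihilator (x ^ n) = annihilator (x ^ (n + 1)))"
proof
  assume par: "is_parameter x"
  have wpr: "\<exists>n\<ge>1. annihilator (x ^ n) = annihilator (x ^ (n + 1))"
    using par by (simp add: is_parameter_def weakly_proregular_def)
  have "1 \<le> ideal_height (principal_ideal x)" unfolding ideal_height_def
  proof (rule le_INF_iff[THEN iffD2], rule ballI)
    fix P assume "P \<in> {P. prime_ideal P \<and> principal_ideal x \<subseteq> P}"
    then have P: "prime_ideal P" and xP: "principal_ideal x \<subseteq> P" by auto
    have "H1_loc_nonzero x P" using par P xP by (simp add: is_parameter_def)
    then obtain a k where ak: "\<And>t. t \<notin> P \<Longrightarrow> \<not> frac_in_image x (t * a) k"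
      unfolding H1_loc_nonzero_def by blast
    let ?S = "{t * x ^ m | t m. t \<notin> P}"
    have Sin: "\<And>t m. t \<notin> P \<Longrightarrow> t * x ^ m \<in> ?S" by blast
    have S1: "1 \<in> ?S" using Sin[OF pI1[OF P], of 0] by simp
    have S0: "0 \<notin> ?S"
    proof
      assume "0 \<in> ?S"
      then obtain t m where t: "t \<notin> P" "0 = t * x ^ m" by blast
      have "x ^ m * (t * a - x ^ k * 0) = 0" using t(2) by (simp add: algebra_simps)
      then have "frac_in_image x (t * a) k" unfolding frac_in_image_def by blast
      then show False using ak[OF t(1)] by simp
    qed
    have Sm: "s * u \<in> ?S" if hs: "s \<in> ?S" and hu: "u \<in> ?S" for s u
    proof -
      obtain t1 m1 where 1: "t1 \<notin> P" "s = t1 * x ^ m1" using hs by blast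
      obtain t2 m2 where 2: "t2 \<notin> P" "u = t2 * x ^ m2" using hu by blast
      have "t1 * t2 \<notin> P" using pIprime[OF P, of t1 t2] 1 2 by auto
      moreover have "s * u = (t1 * t2) * x ^ (m1 + m2)" using 1 2 by (simp add: algebra_simps power_add)
      ultimately show ?thesis using Sin by simp
    qed
    obtain Q where Q: "prime_ideal Q" "Q \<inter> ?S = {}" using prime_avoiding[OF S1 S0 Sm] by blast
    have QP: "Q \<subseteq> P"
    proof
      fix y assume "y \<in> Q"
      show "y \<in> P"
      proof (rule ccontr)
        assume "y \<notin> P"
        then have "y * x ^ 0 \<in> ?S" by (rule Sin)
        then show False using Q(2) \<open>y \<in> Q\<close> by auto
      qed
    qed
    have "1 * x ^ 1 \<in> ?S" by (rule Sin[OF pI1[OF P]])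
    then have xQ: "x \<notin> Q" using Q(2) by auto
    have "x \<in> principal_ideal x" unfolding principal_ideal_def by (rule CollectI, rule exI[of _ 1], simp)
    then have "x \<in> P" using xP by auto
    then have "Q \<subset> P" using QP xQ by auto
    then show "1 \<le> prime_height P" using imp_height_ge1[OF Q(1) _ P] by simp
  qed
  then show "ideal_height (principal_ideal x) \<ge> 1 \<and>
           (\<exists>n\<ge>1. annihilator (x ^ n) = annihilator (x ^ (n + 1)))" using wpr by simp
next
  assume H: "ideal_height (principal_ideal x) \<ge> 1 \<and>
           (\<exists>n\<ge>1. annihilator (x ^ n) = annihilator (x ^ (n + 1)))"
  have xin: "x \<in> principal_ideal x" unfolding principal_ideal_def by (rule CollectI, rule exI[of _ 1], simp)
  have ne: "principal_ideal x \<noteq> UNIV"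
  proof
    assume "principal_ideal x = UNIV"
    then have "1 \<in> principal_ideal x" by simp
    then obtain r where "1 = x * r" unfolding principal_ideal_def by blast
    then have "x dvd 1" unfolding dvd_def by blast
    then show False using assms by simp
  qed
  have H1: "H1_loc_nonzero x p" if p: "prime_ideal p" and xp: "principal_ideal x \<subseteq> p" for p
  proof -
    obtain q where q: "prime_ideal q" "q \<subseteq> p" and qmin: "\<forall>q'. prime_ideal q' \<and> q' \<subseteq> q \<longrightarrow> q' = q"
      using minimal_prime_exists[OF p] by blast
    have xq: "x \<notin> q"
    proof
      assume "x \<in> q"
      then have "\<And>r. x * r \<in> q" using pImul[OF q(1)] by (metis mult.commute)
      then have "principal_ideal x \<subseteq> q" unfolding principal_ideal_def by blast
      then have "ideal_height (principal_ideal x) \<le> prime_height q" unfolding ideal_height_def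
        using q(1) by (intro INF_lower) simp
      then have "1 \<le> prime_height q" using H order_trans by blast
      then obtain q' where "prime_ideal q'" "q' \<subset> q" using height_ge1_imp by blast
      then show False using qmin by blast
    qed
    have xpm: "x \<in> p" using xin xp by auto
    show ?thesis unfolding H1_loc_nonzero_def
    proof (rule exI[of _ 1], rule exI[of _ 1], intro allI impI notI)
      fix t assume tp: "t \<notin> p" and fr: "frac_in_image x (t * 1) 1"
      then obtain b m where bm: "x ^ m * (t - x * b) = 0" unfolding frac_in_image_def by auto
      have "x ^ m \<notin> q" by (rule pow_notin[OF q(1) xq])
      moreover have "x ^ m * (t - x * b) \<in> q" using bm pI0[OF q(1)] by simp
      ultimately have "t - x * b \<in> q" using pIprime[OF q(1)] by blast
      then have "t - x * b \<in> p" using q(2) by auto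
      moreover have "x * b \<in> p" using pImul[OF p xpm, of b] by (simp add: mult.commute)
      ultimately have "(t - x * b) + x * b \<in> p" by (rule pIadd[OF p])
      then show False using tp by simp
    qed
  qed
  show "is_parameter x" unfolding is_parameter_def weakly_proregular_def
    using H ne H1 by blast
qed

end
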